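(* Let $L$ be a positive definite lattice with $\operatorname{rank} L\geq 4$. Then $\mathcal{E}(\operatorname{gen} L)=\mathbb{N}\setminus Q(\operatorname{gen} L)$ is a finite union of admissible arithmetic progressions.
   Context: A lattice is a finitely generated $\mathbb{Z}$-submodule $L$ of a finite-dimensional quadratic space $(V,Q)$ over $\mathbb{Q}$, with associated symmetric bilinear form $B$ satisfying $Q(v)=B(v,v)$; it is assumed throughout that the scale of $L$ (the fractional ideal generated by $\{B(x,y):x,y\in L\}$) equals $\mathbb{Z}$. $L$ is positive definite if $Q(v)>0$ for all nonzero $v\in L$. $\mathbb{N}$ is the set of positive integers. For a prime $p$, $L_p=\mathbb{Z}_p\otimes L$ is the localization, and $Q(L_p)=\{Q(v):v\in L_p\}\subseteq\mathbb{Z}_p$. $\operatorname{gen} L$ is the genus of $L$, and $Q(\operatorname{gen} L)=\{a\in\mathbb{Z}: a\in Q(K)\text{ for some }K\in\operatorname{gen}L\}$; equivalently, $a\in Q(\operatorname{gen}L)$ iff $a\in Q(L_p)$ for all primes $p$. For positive integers $a<m$, $\mathcal{A}_{a,m}=\{a+mx : x\in\mathbb{N}\cup\{0\}\}$, and $\mathcal{A}_{a,m}$ is admissible if $\operatorname{ord}_p a<\operatorname{ord}_p m$ for every prime $p\mid m$. *)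

theory Defs
  imports "HOL-Computational_Algebra.Computational_Algebra" "HOL-Number_Theory.Number_Theory"
begin

text \<open>A lattice of rank n is modelled (up to isometry) as Z^n with an integral symmetric
Gram matrix G (indices < n); vectors are functions nat => int, only coordinates < n matter.\<close>

definition bil :: "nat \<Rightarrow> (nat \<Rightarrow> nat \<Rightarrow> int) \<Rightarrow> (nat \<Rightarrow> int) \<Rightarrow> (nat \<Rightarrow> int) \<Rightarrow> int" where
  "bil n G x y = (\<Sum>i<n. \<Sum>j<n. G i j * x i * y j)"

definition quad :: "nat \<Rightarrow> (nat \<Rightarrow> nat \<Rightarrow> int) \<Rightarrow> (nat \<Rightarrow> int) \<Rightarrow> int" where
  "quad n G x = bil n G x x"

definition sym_gram :: "nat \<Rightarrow> (nat \<Rightarrow> nat \<Rightarrow> int) \<Rightarrow> bool" where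
  "sym_gram n G \<longleftrightarrow> (\<forall>i<n. \<forall>j<n. G i j = G j i)"

definition pos_def :: "nat \<Rightarrow> (nat \<Rightarrow> nat \<Rightarrow> int) \<Rightarrow> bool" where
  "pos_def n G \<longleftrightarrow> (\<forall>x. (\<exists>i<n. x i \<noteq> 0) \<longrightarrow> quad n G x > 0)"

text \<open>scale L = Z: the ideal generated by all B(x,y) is Z.\<close>
definition scale_one :: "nat \<Rightarrow> (nat \<Rightarrow> nat \<Rightarrow> int) \<Rightarrow> bool" where
  "scale_one n G \<longleftrightarrow> (\<forall>d::int. (\<forall>x y. d dvd bil n G x y) \<longrightarrow> d dvd 1)"

text \<open>a \<in> Q(L_p): by compactness of Z_p^n and density of Z^n, equivalent to
representability of a modulo every power of p by integral vectors.\<close>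
definition local_rep :: "nat \<Rightarrow> (nat \<Rightarrow> nat \<Rightarrow> int) \<Rightarrow> int \<Rightarrow> int \<Rightarrow> bool" where
  "local_rep n G p a \<longleftrightarrow> (\<forall>k::nat. \<exists>x. [quad n G x = a] (mod p ^ k))"

definition gen_rep :: "nat \<Rightarrow> (nat \<Rightarrow> nat \<Rightarrow> int) \<Rightarrow> int \<Rightarrow> bool" where
  "gen_rep n G a \<longleftrightarrow> (\<forall>p::int. prime p \<longrightarrow> local_rep n G p a)"

definition exceptions_gen :: "nat \<Rightarrow> (nat \<Rightarrow> nat \<Rightarrow> int) \<Rightarrow> int set" where
  "exceptions_gen n G = {a. a > 0 \<and> \<not> gen_rep n G a}"

definition AP :: "int \<Rightarrow> int \<Rightarrow> int set" where
  "AP a m = {a + m * int x | x. True}"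

definition admissible :: "int \<Rightarrow> int \<Rightarrow> bool" where
  "admissible a m \<longleftrightarrow> 0 < a \<and> a < m \<and>
     (\<forall>p::int. prime p \<longrightarrow> p dvd m \<longrightarrow> multiplicity p a < multiplicity p m)"

end

theory Submission
  imports Defs
begin


lemma sqrt_lift:
  fixes p s :: int
  assumes p: "prime p" and c: "(odd p \<and> 1 \<le> c) \<or> 3 \<le> c" and s: "[s = 1] (mod p^c)"
  shows "\<exists>w. [w^2 = s] (mod p^k) \<and> \<not> p dvd w"
proof (induction k rule: nat_less_induct)
  case (1 k)
  have p1: "p > 1" using p prime_gt_1_int by blast
  show ?case
  proof (cases "k \<le> c")
    case True
    have "[1 = s] (mod p^k)" using s True
      by (meson cong_dvd_modulus cong_sym le_imp_power_dvd)
    moreover have "\<not> p dvd 1" using p1 by (simp add: zdvd_not_zless)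
    ultimately show ?thesis by (intro exI[of _ 1]) simp
  next
    case False
    then obtain j where kj: "k = Suc j" and jc: "c \<le> j" by (cases k) auto
    from 1 kj obtain w where w: "[w^2 = s] (mod p^j)" and wp: "\<not> p dvd w" by auto
    from w obtain r where r: "w^2 - s = p^j * r"
      by (metis cong_iff_dvd_diff dvd_def)
    show ?thesis
    proof (cases "odd p")
      case True
      have j1: "1 \<le> j" using jc c True by auto
      have "coprime (2*w) p"
      proof -
        have "coprime 2 p" using True p
          by simp
        moreover have "coprime w p" using wp p
          by (simp add: coprime_commute prime_imp_coprime)
        ultimately show ?thesis by simp
      qed
      then obtain x where x: "[2*w*x = 1] (mod p)" using cong_solve_coprime_int by blast
      define t where "t = - r * x"
      have d1: "p dvd r + 2*w*t"
      proof -
        have "p dvd 2*w*x - 1" using x by (simp add: cong_iff_dvd_diff)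
        then have "p dvd r * (2*w*x - 1)" by simp
        moreover have "r + 2*w*t = - (r * (2*w*x - 1))" by (simp add: t_def algebra_simps)
        ultimately show ?thesis by simp
      qed
      have eq: "(w + t*p^j)^2 - s = p^j * (r + 2*w*t) + t^2 * p^(2*j)"
      proof -
        have "(w + t*p^j)^2 - s = (w^2 - s) + 2*w*t*p^j + t^2 * (p^j)^2"
          by (simp add: power2_eq_square algebra_simps)
        also have "\<dots> = p^j * (r + 2*w*t) + t^2 * p^(2*j)"
          unfolding r by (simp add: power_mult[symmetric] mult.commute distrib_left)
        finally show ?thesis .
      qed
      have "p^Suc j dvd p^j * (r + 2*w*t)" using d1 by simp
      moreover have "p^Suc j dvd t^2 * p^(2*j)"
        using j1 by (intro dvd_mult le_imp_power_dvd) simp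
      ultimately have "p^Suc j dvd (w + t*p^j)^2 - s" unfolding eq by simp
      moreover have "\<not> p dvd w + t*p^j"
      proof
        assume "p dvd w + t*p^j"
        moreover have "p dvd t*p^j" using j1 by (simp add: dvd_power_le)
        ultimately have "p dvd w" by (metis dvd_add_left_iff add.commute)
        with wp show False by simp
      qed
      ultimately show ?thesis using kj by (auto simp: cong_iff_dvd_diff)
    next
      case False
      then have p2: "p = 2" using p prime_odd_int[of p] prime_ge_2_int[of p] by fastforce
      have j3: "3 \<le> j" using jc c False by auto
      then obtain i where ji: "j = Suc i" and i2: "2 \<le> i" by (cases j) auto
      have wodd: "odd w" using wp p2 by simp
      define t where "t = r"
      have eq: "(w + t*2^i)^2 - s = 2^j * (r * (1 + w)) + t^2 * 2^(2*i)"
      proof -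
        have "(w + t*2^i)^2 - s = (w^2 - s) + 2*w*t*2^i + t^2 * (2^i)^2"
          by (simp add: power2_eq_square algebra_simps)
        also have "\<dots> = 2^j * (r * (1 + w)) + t^2 * 2^(2*i)"
          unfolding r p2 ji t_def by (simp add: power_mult[symmetric] mult.commute algebra_simps)
        finally show ?thesis .
      qed
      have "(2::int)^Suc j dvd 2^j * (r * (1 + w))" using wodd by simp
      moreover have "(2::int)^Suc j dvd t^2 * 2^(2*i)"
        using i2 ji by (intro dvd_mult le_imp_power_dvd) simp
      ultimately have "p^Suc j dvd (w + t*p^i)^2 - s" unfolding eq p2 by simp
      moreover have "\<not> p dvd w + t*p^i"
        using wodd i2 p2 by (simp add: dvd_power_le)
      ultimately show ?thesis using kj by (auto simp: cong_iff_dvd_diff)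
    qed
  qed
qed

lemma rescale:
  fixes p v v' :: int
  assumes p: "prime p" and c: "(odd p \<and> 1 \<le> c) \<or> 3 \<le> c" and v: "\<not> p dvd v"
    and vv: "[v' = v] (mod p^c)"
  shows "\<exists>w. [v * w^2 = v'] (mod p^k)"
proof -
  define K where "K = max k c"
  have "coprime v (p^K)" using v p by (simp add: prime_imp_coprime coprime_commute)
  then obtain i where i: "[v * i = 1] (mod p^K)" using cong_solve_coprime_int by blast
  have iK: "[v * i = 1] (mod p^c)" "[v * i = 1] (mod p^k)"
    using i unfolding K_def by (meson cong_dvd_modulus le_imp_power_dvd max.cobounded1 max.cobounded2)+
  have "[v' * i = v * i] (mod p^c)" using vv by (simp add: cong_scalar_right)
  then have "[v' * i = 1] (mod p^c)" using iK(1) by (rule cong_trans)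
  then obtain w where w: "[w^2 = v' * i] (mod p^k)" using sqrt_lift[OF p c] by blast
  have "[v * w^2 = v * (v' * i)] (mod p^k)" using w by (simp add: cong_scalar_left)
  also have "v * (v' * i) = v' * (v * i)" by simp
  also have "[v' * (v * i) = v' * 1] (mod p^k)" using cong_scalar_left[OF iK(2), of v'] by simp
  finally show ?thesis by auto
qed

definition qd :: "(nat \<Rightarrow> int) \<Rightarrow> (nat \<Rightarrow> int) \<Rightarrow> int" where
  "qd d x = (\<Sum>i<4. d i * (x i)^2)"

definition LRq :: "int \<Rightarrow> (nat \<Rightarrow> int) \<Rightarrow> int \<Rightarrow> bool" where
  "LRq p d a \<longleftrightarrow> (\<forall>k::nat. \<exists>x. [qd d x = a] (mod p^k))"

lemma qd_upd:
  assumes "ix < 4"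
  shows "qd d (z(ix := y)) = qd d z - d ix * (z ix)^2 + d ix * y^2"
proof -
  have fin: "finite {..<(4::nat)}" by simp
  have "qd d (z(ix := y)) = d ix * y^2 + (\<Sum>i\<in>{..<4} - {ix}. d i * ((z(ix:=y)) i)^2)"
    unfolding qd_def using sum.remove[OF fin, of ix "\<lambda>i. d i * ((z(ix:=y)) i)^2"] assms by simp
  also have "(\<Sum>i\<in>{..<4} - {ix}. d i * ((z(ix:=y)) i)^2) = (\<Sum>i\<in>{..<4} - {ix}. d i * (z i)^2)"
    by (rule sum.cong) auto
  also have "\<dots> = qd d z - d ix * (z ix)^2"
    unfolding qd_def using sum.remove[OF fin, of ix "\<lambda>i. d i * (z i)^2"] assms by simp
  finally show ?thesis by (simp add: fun_upd_def)
qed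

lemma gen_lift:
  fixes p v :: int
  assumes p: "prime p" and c: "(odd p \<and> 1 \<le> c) \<or> 3 \<le> c" and ix: "ix < 4"
    and dz: "d ix * (z ix)^2 = p^f * v" and v: "\<not> p dvd v"
    and za: "[qd d z = a] (mod p^(f+c))"
  shows "LRq p d a"
  unfolding LRq_def
proof
  fix k :: nat
  from za obtain r where r: "a - qd d z = p^(f+c) * r"
    by (metis cong_iff_dvd_diff cong_sym dvd_def)
  have "[v + p^c * r = v] (mod p^c)" by (simp add: cong_iff_dvd_diff)
  then obtain w where w: "[v * w^2 = v + p^c * r] (mod p^k)" using rescale[OF p c v] by blast
  define x where "x = z(ix := z ix * w)"
  have "qd d x = qd d z - d ix * (z ix)^2 + d ix * (z ix * w)^2"
    unfolding x_def by (rule qd_upd[OF ix])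
  also have "d ix * (z ix * w)^2 = p^f * v * w^2" using dz by (simp add: power_mult_distrib)
  finally have "qd d x - a = p^f * (v * w^2 - (v + p^c * r))"
    using r dz by (simp add: algebra_simps power_add)
  moreover have "p^k dvd v * w^2 - (v + p^c * r)" using w by (simp add: cong_iff_dvd_diff)
  ultimately have "p^k dvd qd d x - a" by simp
  then show "\<exists>x. [qd d x = a] (mod p^k)" by (auto simp: cong_iff_dvd_diff)
qed

lemma place:
  fixes p :: int
  assumes I: "I \<subseteq> {..<4}"
    and g: "\<And>m. m \<in> I \<Longrightarrow> e m \<le> g m \<and> even (g m - e m) \<and> d m = p^(e m) * u m"
  shows "qd d (\<lambda>m. if m \<in> I then y m * p^((g m - e m) div 2) else 0)
          = (\<Sum>m\<in>I. p^(g m) * u m * (y m)^2)"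
proof -
  let ?z = "\<lambda>m. if m \<in> I then y m * p^((g m - e m) div 2) else 0"
  have "qd d ?z = (\<Sum>m\<in>I. d m * (?z m)^2)"
    unfolding qd_def by (rule sum.mono_neutral_right) (use I in auto)
  also have "\<dots> = (\<Sum>m\<in>I. p^(g m) * u m * (y m)^2)"
  proof (rule sum.cong)
    fix m assume m: "m \<in> I"
    from g[OF m] have em: "e m \<le> g m" "even (g m - e m)" "d m = p^(e m) * u m" by auto
    have ge: "g m = e m + 2 * ((g m - e m) div 2)" using em by simp
    have "d m * (?z m)^2 = p^(e m) * u m * (y m)^2 * (p^((g m - e m) div 2))^2"
      using m em by (simp add: power_mult_distrib)
    also have "\<dots> = p^(e m + 2 * ((g m - e m) div 2)) * u m * (y m)^2"
      by (simp add: power_add power_mult[symmetric] mult.commute mult.left_commute)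
    also have "\<dots> = p^(g m) * u m * (y m)^2" using ge by simp
    finally show "d m * (?z m)^2 = p^(g m) * u m * (y m)^2" .
  qed simp
  finally show ?thesis .
qed

lemma gen_place:
  fixes p :: int
  assumes p: "prime p" and c: "(odd p \<and> 1 \<le> c) \<or> 3 \<le> c"
    and I: "I \<subseteq> {..<4}" and ix: "ix \<in> I"
    and g: "\<And>m. m \<in> I \<Longrightarrow> e m \<le> g m \<and> even (g m - e m) \<and> d m = p^(e m) * u m"
    and u0: "\<not> p dvd u ix" and y0: "\<not> p dvd y ix"
    and cg: "[(\<Sum>m\<in>I. p^(g m) * u m * (y m)^2) = a] (mod p^(g ix + c))"
  shows "LRq p d a"
proof -
  let ?z = "\<lambda>m. if m \<in> I then y m * p^((g m - e m) div 2) else 0"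
  have dz: "d ix * (?z ix)^2 = p^(g ix) * (u ix * (y ix)^2)"
  proof -
    from g[OF ix] have em: "e ix \<le> g ix" "even (g ix - e ix)" "d ix = p^(e ix) * u ix" by auto
    have ge: "g ix = e ix + 2 * ((g ix - e ix) div 2)" using em by simp
    have "d ix * (?z ix)^2 = p^(e ix) * u ix * (y ix)^2 * (p^((g ix - e ix) div 2))^2"
      using ix em by (simp add: power_mult_distrib)
    also have "\<dots> = p^(e ix + 2 * ((g ix - e ix) div 2)) * (u ix * (y ix)^2)"
      by (simp add: power_add power_mult[symmetric] mult.commute mult.left_commute)
    also have "\<dots> = p^(g ix) * (u ix * (y ix)^2)" using ge by simp
    finally show ?thesis .
  qed
  have nd: "\<not> p dvd u ix * (y ix)^2"
    using u0 y0 p by (simp add: prime_dvd_mult_iff prime_dvd_power_iff)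
  have i4: "ix < 4" using I ix by auto
  have cz: "[qd d ?z = a] (mod p^(g ix + c))" using place[OF I g] cg by simp
  show ?thesis by (rule gen_lift[OF p c i4 dz nd cz])
qed

lemma sq_inj:
  fixes p b k :: int
  assumes p: "prime p" and b: "\<not> p dvd b"
  shows "inj_on (\<lambda>y. (b*y^2 + k) mod p) {0..(p-1) div 2}"
proof (rule inj_onI)
  fix x y assume x: "x \<in> {0..(p-1) div 2}" and y: "y \<in> {0..(p-1) div 2}"
    and e: "(b*x^2 + k) mod p = (b*y^2 + k) mod p"
  have p1: "p > 1" using p prime_gt_1_int by blast
  from e have "p dvd (b*x^2 + k) - (b*y^2 + k)" by (simp add: mod_eq_dvd_iff)
  also have "(b*x^2 + k) - (b*y^2 + k) = b * ((x - y) * (x + y))" by (simp add: algebra_simps power2_eq_square)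
  finally have "p dvd (x - y) * (x + y)" using b p by (simp add: prime_dvd_mult_iff)
  then have "p dvd x - y \<or> p dvd x + y" using p by (simp add: prime_dvd_mult_iff)
  then show "x = y"
  proof
    assume h: "p dvd x - y"
    show "x = y"
    proof (rule ccontr)
      assume "x \<noteq> y"
      then have "\<bar>p\<bar> \<le> \<bar>x - y\<bar>" using h dvd_imp_le_int by force
      moreover have "\<bar>x - y\<bar> < p" using x y p1 by auto
      ultimately show False using p1 by simp
    qed
  next
    assume h: "p dvd x + y"
    show "x = y"
    proof (rule ccontr)
      assume "x \<noteq> y"
      then have "x + y \<noteq> 0" using x y by auto
      then have "\<bar>p\<bar> \<le> \<bar>x + y\<bar>" using h dvd_imp_le_int by force
      moreover have "\<bar>x + y\<bar> < p" using x y p1 by auto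
      ultimately show False using p1 by simp
    qed
  qed
qed

lemma two_squares_mod:
  fixes p b1 b2 c :: int
  assumes p: "prime p" and po: "odd p" and b1: "\<not> p dvd b1" and b2: "\<not> p dvd b2"
  shows "\<exists>y1 y2. [b1*y1^2 + b2*y2^2 = c] (mod p)"
proof -
  have p1: "p > 1" using p prime_gt_1_int by blast
  let ?H = "{0..(p-1) div 2}"
  let ?f1 = "\<lambda>y. (b1*y^2 + 0) mod p"
  let ?f2 = "\<lambda>y. ((-b2)*y^2 + c) mod p"
  have nb2: "\<not> p dvd -b2" using b2 by simp
  have cH: "card ?H = nat ((p-1) div 2 + 1)" by simp
  have c1: "card (?f1 ` ?H) = card ?H" by (rule card_image[OF sq_inj[OF p b1]])
  have c2: "card (?f2 ` ?H) = card ?H" by (rule card_image[OF sq_inj[OF p nb2]])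
  have sub: "?f1 ` ?H \<union> ?f2 ` ?H \<subseteq> {0..<p}" using p1 by auto
  have "(?f1 ` ?H) \<inter> (?f2 ` ?H) \<noteq> {}"
  proof
    assume dis: "(?f1 ` ?H) \<inter> (?f2 ` ?H) = {}"
    have "card (?f1 ` ?H \<union> ?f2 ` ?H) = card (?f1 ` ?H) + card (?f2 ` ?H)"
      by (rule card_Un_disjoint) (use dis in auto)
    also have "\<dots> = 2 * nat ((p-1) div 2 + 1)" using c1 c2 cH by simp
    also have "\<dots> = nat (p + 1)" using po p1 by (auto elim!: oddE)
    finally have "card (?f1 ` ?H \<union> ?f2 ` ?H) = nat (p + 1)" .
    moreover have "card (?f1 ` ?H \<union> ?f2 ` ?H) \<le> card {0..<p}"
      by (rule card_mono[OF _ sub]) simp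
    ultimately show False using p1 by simp
  qed
  then obtain x y where "?f1 x = ?f2 y" by auto
  then have "[b1*x^2 + b2*y^2 = c] (mod p)"
    by (simp add: cong_def mod_eq_dvd_iff algebra_simps)
  then show ?thesis by blast
qed


lemma m2: "((a::int) + b) mod 8 = (a mod 8 + b mod 8) mod 8"
  by (rule mod_add_eq[symmetric])
lemma m3: "((a::int) + b + c) mod 8 = (a mod 8 + b mod 8 + c mod 8) mod 8"
proof -
  have "(a+b+c) mod 8 = ((a+b) mod 8 + c mod 8) mod 8" by (rule mod_add_eq[symmetric])
  also have "(a+b) mod 8 = (a mod 8 + b mod 8) mod 8" by (rule mod_add_eq[symmetric])
  also have "((a mod 8 + b mod 8) mod 8 + c mod 8) mod 8 = (a mod 8 + b mod 8 + c mod 8) mod 8"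
    by (rule mod_add_left_eq)
  finally show ?thesis .
qed
lemma m4: "((a::int) + b + c + d) mod 8 = (a mod 8 + b mod 8 + c mod 8 + d mod 8) mod 8"
proof -
  have "(a+b+c+d) mod 8 = ((a+b+c) mod 8 + d mod 8) mod 8" by (rule mod_add_eq[symmetric])
  also have "(a+b+c) mod 8 = (a mod 8 + b mod 8 + c mod 8) mod 8" by (rule m3)
  also have "((a mod 8 + b mod 8 + c mod 8) mod 8 + d mod 8) mod 8 = (a mod 8 + b mod 8 + c mod 8 + d mod 8) mod 8"
    by (rule mod_add_left_eq)
  finally show ?thesis .
qed

lemma F2a:
  fixes X J K L :: int
  assumes x: "X mod 8 = 0 \<or> X mod 8 = 2 \<or> X mod 8 = 4 \<or> X mod 8 = 6"
   and j: "J mod 8 = 2 \<or> J mod 8 = 6" and k: "K mod 8 = 2 \<or> K mod 8 = 6" and l: "L mod 8 = 2 \<or> L mod 8 = 6"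
  shows "X mod 8 = 0 \<or> (X + J) mod 8 = 0 \<or> (X + K) mod 8 = 0 \<or> (X + L) mod 8 = 0 \<or>
     (X + J + K) mod 8 = 0 \<or> (X + J + L) mod 8 = 0 \<or> (X + K + L) mod 8 = 0 \<or> (X + J + K + L) mod 8 = 0"
  unfolding m2[of X] m3[of X] m4[of X] using x j k l by (elim disjE; simp)

lemma odd8: "odd (u::int) \<Longrightarrow> u mod 8 = 1 \<or> u mod 8 = 3 \<or> u mod 8 = 5 \<or> u mod 8 = 7"
  by presburger

lemma even8: "even (X::int) \<Longrightarrow> X mod 8 = 0 \<or> X mod 8 = 2 \<or> X mod 8 = 4 \<or> X mod 8 = 6"
  by presburger
lemma two8: "odd (u::int) \<Longrightarrow> (2*u) mod 8 = 2 \<or> (2*u) mod 8 = 6"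
  by presburger
lemma four8: "odd (u::int) \<Longrightarrow> (4*u) mod 8 = 4"
  by presburger
lemma four8': "4 dvd (Y::int) \<Longrightarrow> Y mod 8 = 0 \<or> Y mod 8 = 4"
  by presburger

lemma E4:
  fixes Y w :: int
  assumes "4 dvd Y" "odd w"
  shows "\<exists>e\<in>{0,1}. 8 dvd Y + 4*w*e"
proof -
  have "Y mod 8 = 0 \<or> Y mod 8 = 4" using assms(1) by (rule four8')
  moreover have "(4*w) mod 8 = 4" using assms(2) by (rule four8)
  ultimately have "Y mod 8 = 0 \<or> (Y + 4*w) mod 8 = 0"
    unfolding m2[of Y] by auto
  then show ?thesis by (auto simp: dvd_eq_mod_eq_0)
qed

lemma F1:
  fixes X v1 vj :: int
  assumes "even X" "odd v1" "odd vj"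
  shows "\<exists>e1\<in>{0,1}. \<exists>e2\<in>{0,1}. 8 dvd X + 4*v1*e1 + 2*vj*e2"
proof -
  have x: "X mod 8 = 0 \<or> X mod 8 = 2 \<or> X mod 8 = 4 \<or> X mod 8 = 6" using assms(1) by (rule even8)
  have f: "(4*v1) mod 8 = 4" using assms(2) by (rule four8)
  have j: "(2*vj) mod 8 = 2 \<or> (2*vj) mod 8 = 6" using assms(3) by (rule two8)
  have "X mod 8 = 0 \<or> (X + 4*v1) mod 8 = 0 \<or> (X + 2*vj) mod 8 = 0 \<or> (X + 4*v1 + 2*vj) mod 8 = 0"
    unfolding m2[of X] m3[of X] using x f j by (elim disjE; simp)
  then show ?thesis by (auto simp: dvd_eq_mod_eq_0)
qed

lemma F2:
  fixes X vj vk vl :: int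
  assumes "even X" "odd vj" "odd vk" "odd vl"
  shows "\<exists>ej\<in>{0,1}. \<exists>ek\<in>{0,1}. \<exists>el\<in>{0,1}. 8 dvd X + 2*vj*ej + 2*vk*ek + 2*vl*el"
proof -
  have "X mod 8 = 0 \<or> (X + 2*vj) mod 8 = 0 \<or> (X + 2*vk) mod 8 = 0 \<or> (X + 2*vl) mod 8 = 0 \<or>
     (X + 2*vj + 2*vk) mod 8 = 0 \<or> (X + 2*vj + 2*vl) mod 8 = 0 \<or> (X + 2*vk + 2*vl) mod 8 = 0 \<or>
     (X + 2*vj + 2*vk + 2*vl) mod 8 = 0"
    by (rule F2a[OF even8[OF assms(1)] two8[OF assms(2)] two8[OF assms(3)] two8[OF assms(4)]])
  then show ?thesis by (auto simp: dvd_eq_mod_eq_0)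
qed

lemma three_odd_pair:
  fixes a b c :: int
  assumes "odd a" "odd b" "odd c"
  shows "4 dvd a - b \<or> 4 dvd a - c \<or> 4 dvd b - c"
  using assms by presburger

lemma pair4:
  fixes a b u :: int
  assumes "odd a" "odd b" "odd u" "4 dvd a - b"
  shows "4 dvd a + b - 2*u"
  using assms by presburger

lemma triple4:
  fixes a b c u :: int
  assumes "odd a" "odd b" "odd c" "odd u" "\<not> 4 dvd a - u" "\<not> 4 dvd b - u" "\<not> 4 dvd c - u"
  shows "4 dvd a + b + c - u"
  using assms by presburger


lemma cong_from_dvd:
  fixes p S a Y :: int
  assumes "S - a = p^s * Y" "p^c dvd Y"
  shows "[S = a] (mod p^(s+c))"
  using assms by (simp add: cong_iff_dvd_diff power_add mult_dvd_mono)

lemma nat_diff_add: "(e::nat) \<le> s \<Longrightarrow> s + k - e = s - e + k"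
  by arith

lemma sq01: "(x::int) \<in> {0,1} \<Longrightarrow> x^2 = x"
  by auto

lemma c2_i:
  fixes d v :: "nat \<Rightarrow> int" and u :: int
  assumes H: "\<And>m. m < 4 \<Longrightarrow> d m = 2^(e m) * v m \<and> odd (v m) \<and> e m < s" and u: "odd u"
    and idx: "i0 < 4" "i1 < 4" "j < 4" "i0 \<noteq> i1" "i0 \<noteq> j" "i1 \<noteq> j"
    and par: "even (s - e i0)" "even (s - e i1)" "odd (s - e j)"
  shows "LRq 2 d (2^s * u)"
proof -
  have ev: "even (v i0 - u)" using H[OF idx(1)] u by simp
  have "\<exists>e1\<in>{0,1}. \<exists>e2\<in>{0,1}. 8 dvd (v i0 - u) + 4 * v i1 * e1 + 2 * v j * e2"
    by (rule F1[OF ev]) (use H idx in auto)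
  then obtain e1 e2 where e: "e1 \<in> {0,1}" "e2 \<in> {0,1}" and dv: "8 dvd (v i0 - u) + 4 * v i1 * e1 + 2 * v j * e2"
    by blast
  have e1: "e1^2 = e1" and e2: "e2^2 = e2" using e by (auto intro: sq01)
  have gc: "e m \<le> (if m = i0 then s else if m = i1 then s + 2 else s + 1) \<and>
     even ((if m = i0 then s else if m = i1 then s + 2 else s + 1) - e m) \<and> d m = 2^(e m) * v m"
    if m: "m \<in> {i0, i1, j}" for m
  proof -
    from m idx have m4: "m < 4" by auto
    from H[OF m4] have em: "e m < s" "d m = 2^(e m) * v m" by auto
    show ?thesis using m par em nat_diff_add[of "e m" s 2] nat_diff_add[of "e m" s 1] by auto
  qed
  have sum: "(\<Sum>m\<in>{i0, i1, j}. 2^(if m = i0 then s else if m = i1 then s + 2 else s + 1) * v m *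
       (if m = i0 then 1 else if m = i1 then e1 else e2)^2) - 2^s * u
     = 2^s * ((v i0 - u) + 4 * v i1 * e1 + 2 * v j * e2)"
    using idx e1 e2 by (simp add: power_add algebra_simps)
  have cg: "[(\<Sum>m\<in>{i0, i1, j}. 2^(if m = i0 then s else if m = i1 then s + 2 else s + 1) * v m *
       (if m = i0 then 1 else if m = i1 then e1 else e2)^2) = 2^s * u] (mod 2^((if i0 = i0 then s else if i0 = i1 then s + 2 else s + 1) + 3))"
    using cong_from_dvd[OF sum, of 3] dv by simp
  show ?thesis
    by (rule gen_place[where I = "{i0, i1, j}" and ix = i0 and c = 3 and e = e and u = v and
          g = "\<lambda>m. if m = i0 then s else if m = i1 then s + 2 else s + 1" and
          y = "\<lambda>m. if m = i0 then 1 else if m = i1 then e1 else e2", OF _ _ _ _ gc _ _ cg])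
       (use idx H in auto)
qed

lemma c2_ii:
  fixes d v :: "nat \<Rightarrow> int" and u :: int
  assumes H: "\<And>m. m < 4 \<Longrightarrow> d m = 2^(e m) * v m \<and> odd (v m) \<and> e m < s" and u: "odd u"
    and idx: "i0 < 4" "j < 4" "k < 4" "l < 4" "i0 \<noteq> j" "i0 \<noteq> k" "i0 \<noteq> l" "j \<noteq> k" "j \<noteq> l" "k \<noteq> l"
    and par: "even (s - e i0)" "odd (s - e j)" "odd (s - e k)" "odd (s - e l)"
  shows "LRq 2 d (2^s * u)"
proof -
  have ev: "even (v i0 - u)" using H[OF idx(1)] u by simp
  have "\<exists>ej\<in>{0,1}. \<exists>ek\<in>{0,1}. \<exists>el\<in>{0,1}. 8 dvd (v i0 - u) + 2 * v j * ej + 2 * v k * ek + 2 * v l * el"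
    by (rule F2[OF ev]) (use H idx in auto)
  then obtain ej ek el where e: "ej \<in> {0,1}" "ek \<in> {0,1}" "el \<in> {0,1}"
    and dv: "8 dvd (v i0 - u) + 2 * v j * ej + 2 * v k * ek + 2 * v l * el"
    by blast
  have e2: "ej^2 = ej" "ek^2 = ek" "el^2 = el" using e by (auto intro: sq01)
  have gc: "e m \<le> (if m = i0 then s else s + 1) \<and>
     even ((if m = i0 then s else s + 1) - e m) \<and> d m = 2^(e m) * v m"
    if m: "m \<in> {i0, j, k, l}" for m
  proof -
    from m idx have m4: "m < 4" by auto
    from H[OF m4] have em: "e m < s" "d m = 2^(e m) * v m" by auto
    show ?thesis using m par em nat_diff_add[of "e m" s 1] by auto
  qed
  have sum: "(\<Sum>m\<in>{i0, j, k, l}. 2^(if m = i0 then s else s + 1) * v m *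
       (if m = i0 then 1 else if m = j then ej else if m = k then ek else el)^2) - 2^s * u
     = 2^s * ((v i0 - u) + 2 * v j * ej + 2 * v k * ek + 2 * v l * el)"
    using idx e2 by (simp add: power_add algebra_simps)
  have cg: "[(\<Sum>m\<in>{i0, j, k, l}. 2^(if m = i0 then s else s + 1) * v m *
       (if m = i0 then 1 else if m = j then ej else if m = k then ek else el)^2) = 2^s * u]
       (mod 2^((if i0 = i0 then s else s + 1) + 3))"
    using cong_from_dvd[OF sum, of 3] dv by simp
  show ?thesis
    by (rule gen_place[where I = "{i0, j, k, l}" and ix = i0 and c = 3 and e = e and u = v and
          g = "\<lambda>m. if m = i0 then s else s + 1" and
          y = "\<lambda>m. if m = i0 then 1 else if m = j then ej else if m = k then ek else el", OF _ _ _ _ gc _ _ cg])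
       (use idx H in auto)
qed

lemma c2_iiia:
  fixes d v :: "nat \<Rightarrow> int" and u :: int
  assumes H: "\<And>m. m < 4 \<Longrightarrow> d m = 2^(e m) * v m \<and> odd (v m) \<and> e m < s" and u: "odd u"
    and idx: "i0 < 4" "i1 < 4" "i0 \<noteq> i1"
    and par: "even (s - e i0)" "even (s - e i1)" and d4: "4 dvd v i0 - u"
  shows "LRq 2 d (2^s * u)"
proof -
  have "\<exists>e1\<in>{0,1}. 8 dvd (v i0 - u) + 4 * v i1 * e1"
    by (rule E4[OF d4]) (use H idx in auto)
  then obtain e1 where e: "e1 \<in> {0,1}" and dv: "8 dvd (v i0 - u) + 4 * v i1 * e1"
    by blast
  have e2: "e1^2 = e1" using e by (auto intro: sq01)
  have gc: "e m \<le> (if m = i0 then s else s + 2) \<and>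
     even ((if m = i0 then s else s + 2) - e m) \<and> d m = 2^(e m) * v m"
    if m: "m \<in> {i0, i1}" for m
  proof -
    from m idx have m4: "m < 4" by auto
    from H[OF m4] have em: "e m < s" "d m = 2^(e m) * v m" by auto
    show ?thesis using m par em nat_diff_add[of "e m" s 2] by auto
  qed
  have sum: "(\<Sum>m\<in>{i0, i1}. 2^(if m = i0 then s else s + 2) * v m *
       (if m = i0 then 1 else e1)^2) - 2^s * u
     = 2^s * ((v i0 - u) + 4 * v i1 * e1)"
    using idx e2 by (simp add: power_add algebra_simps)
  have cg: "[(\<Sum>m\<in>{i0, i1}. 2^(if m = i0 then s else s + 2) * v m *
       (if m = i0 then 1 else e1)^2) = 2^s * u]
       (mod 2^((if i0 = i0 then s else s + 2) + 3))"
    using cong_from_dvd[OF sum, of 3] dv by simp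
  show ?thesis
    by (rule gen_place[where I = "{i0, i1}" and ix = i0 and c = 3 and e = e and u = v and
          g = "\<lambda>m. if m = i0 then s else s + 2" and
          y = "\<lambda>m. if m = i0 then 1 else e1", OF _ _ _ _ gc _ _ cg])
       (use idx H in auto)
qed

lemma c2_iiib:
  fixes d v :: "nat \<Rightarrow> int" and u :: int
  assumes H: "\<And>m. m < 4 \<Longrightarrow> d m = 2^(e m) * v m \<and> odd (v m) \<and> e m < s" and u: "odd u"
    and idx: "ia < 4" "ib < 4" "ic < 4" "ie < 4" "ia \<noteq> ib" "ia \<noteq> ic" "ia \<noteq> ie" "ib \<noteq> ic" "ib \<noteq> ie" "ic \<noteq> ie"
    and par: "even (s - e ia)" "even (s - e ib)" "even (s - e ic)" "even (s - e ie)"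
    and nd: "\<not> 4 dvd v ia - u" "\<not> 4 dvd v ib - u" "\<not> 4 dvd v ic - u"
  shows "LRq 2 d (2^s * u)"
proof -
  have d4: "4 dvd v ia + v ib + v ic - u"
    by (rule triple4) (use H idx u nd in auto)
  have "\<exists>e1\<in>{0,1}. 8 dvd (v ia + v ib + v ic - u) + 4 * v ie * e1"
    by (rule E4[OF d4]) (use H idx in auto)
  then obtain e1 where e: "e1 \<in> {0,1}" and dv: "8 dvd (v ia + v ib + v ic - u) + 4 * v ie * e1"
    by blast
  have e2: "e1^2 = e1" using e by (auto intro: sq01)
  have gc: "e m \<le> (if m = ie then s + 2 else s) \<and>
     even ((if m = ie then s + 2 else s) - e m) \<and> d m = 2^(e m) * v m"
    if m: "m \<in> {ia, ib, ic, ie}" for m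
  proof -
    from m idx have m4: "m < 4" by auto
    from H[OF m4] have em: "e m < s" "d m = 2^(e m) * v m" by auto
    show ?thesis using m par em nat_diff_add[of "e m" s 2] by auto
  qed
  have sum: "(\<Sum>m\<in>{ia, ib, ic, ie}. 2^(if m = ie then s + 2 else s) * v m *
       (if m = ie then e1 else 1)^2) - 2^s * u
     = 2^s * ((v ia + v ib + v ic - u) + 4 * v ie * e1)"
    using idx e2 by (simp add: power_add algebra_simps)
  have cg: "[(\<Sum>m\<in>{ia, ib, ic, ie}. 2^(if m = ie then s + 2 else s) * v m *
       (if m = ie then e1 else 1)^2) = 2^s * u]
       (mod 2^((if ia = ie then s + 2 else s) + 3))"
    using cong_from_dvd[OF sum, of 3] dv idx by simp
  show ?thesis
    by (rule gen_place[where I = "{ia, ib, ic, ie}" and ix = ia and c = 3 and e = e and u = v and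
          g = "\<lambda>m. if m = ie then s + 2 else s" and
          y = "\<lambda>m. if m = ie then e1 else 1", OF _ _ _ _ gc _ _ cg])
       (use idx H in auto)
qed

lemma c2_iv:
  fixes d v :: "nat \<Rightarrow> int" and u :: int
  assumes H: "\<And>m. m < 4 \<Longrightarrow> d m = 2^(e m) * v m \<and> odd (v m) \<and> e m < Suc f" and u: "odd u"
    and idx: "i < 4" "j < 4" "k < 4" "i \<noteq> j" "i \<noteq> k" "j \<noteq> k"
    and par: "odd (Suc f - e i)" "odd (Suc f - e j)" "odd (Suc f - e k)"
    and dij: "4 dvd v i - v j"
  shows "LRq 2 d (2^(Suc f) * u)"
proof -
  have d4: "4 dvd v i + v j - 2 * u"
    by (rule pair4) (use H idx u dij in auto)
  have "\<exists>e1\<in>{0,1}. 8 dvd (v i + v j - 2 * u) + 4 * v k * e1"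
    by (rule E4[OF d4]) (use H idx in auto)
  then obtain e1 where e: "e1 \<in> {0,1}" and dv: "8 dvd (v i + v j - 2 * u) + 4 * v k * e1"
    by blast
  have e2: "e1^2 = e1" using e by (auto intro: sq01)
  have gc: "e m \<le> (if m = k then f + 2 else f) \<and>
     even ((if m = k then f + 2 else f) - e m) \<and> d m = 2^(e m) * v m"
    if m: "m \<in> {i, j, k}" for m
  proof -
    from m idx have m4: "m < 4" by auto
    from H[OF m4] have em: "e m \<le> f" "d m = 2^(e m) * v m" by auto
    have "odd (Suc f - e m)" using m par by auto
    then have "even (f - e m)" using em(1) by (simp add: Suc_diff_le)
    then show ?thesis using m em nat_diff_add[of "e m" f 2] by auto
  qed
  have sum: "(\<Sum>m\<in>{i, j, k}. 2^(if m = k then f + 2 else f) * v m *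
       (if m = k then e1 else 1)^2) - 2^(Suc f) * u
     = 2^f * ((v i + v j - 2 * u) + 4 * v k * e1)"
    using idx e2 by (simp add: power_add algebra_simps)
  have cg: "[(\<Sum>m\<in>{i, j, k}. 2^(if m = k then f + 2 else f) * v m *
       (if m = k then e1 else 1)^2) = 2^(Suc f) * u]
       (mod 2^((if i = k then f + 2 else f) + 3))"
    using cong_from_dvd[OF sum, of 3] dv idx by simp
  show ?thesis
    by (rule gen_place[where I = "{i, j, k}" and ix = i and c = 3 and e = e and u = v and
          g = "\<lambda>m. if m = k then f + 2 else f" and
          y = "\<lambda>m. if m = k then e1 else 1", OF _ _ _ _ gc _ _ cg])
       (use idx H in auto)
qed



lemma codd_A:
  fixes d v :: "nat \<Rightarrow> int" and u p :: int
  assumes p: "prime p" and po: "odd p"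
    and H: "\<And>m. m < 4 \<Longrightarrow> d m = p^(e m) * v m \<and> \<not> p dvd v m \<and> e m < s" and u: "\<not> p dvd u"
    and idx: "i < 4" "j < 4" "i \<noteq> j"
    and par: "even (s - e i)" "even (s - e j)"
  shows "LRq p d (p^s * u)"
proof -
  have "\<not> p dvd v i" "\<not> p dvd v j" using H[OF idx(1)] H[OF idx(2)] by auto
  then obtain y1 y2 where yy: "[v i * y1^2 + v j * y2^2 = u] (mod p)"
    using two_squares_mod[OF p po] by blast
  have pd: "p dvd v i * y1^2 + v j * y2^2 - u" using yy by (simp add: cong_iff_dvd_diff)
  have c1: "(odd p \<and> 1 \<le> (1::nat)) \<or> 3 \<le> (1::nat)" using po by simp
  have gc: "e m \<le> s \<and> even (s - e m) \<and> d m = p^(e m) * v m"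
    if m: "m \<in> {i, j}" for m
  proof -
    from m idx have m4: "m < 4" by auto
    from H[OF m4] have em: "e m < s" "d m = p^(e m) * v m" by auto
    show ?thesis using m par em by auto
  qed
  have sum: "(\<Sum>m\<in>{i, j}. p^s * v m * (if m = i then y1 else y2)^2) - p^s * u
     = p^s * (v i * y1^2 + v j * y2^2 - u)"
    using idx by (simp add: algebra_simps)
  have cg: "[(\<Sum>m\<in>{i, j}. p^s * v m * (if m = i then y1 else y2)^2) = p^s * u] (mod p^(s + 1))"
    using cong_from_dvd[OF sum, of 1] pd by simp
  have "\<not> p dvd y1 \<or> \<not> p dvd y2"
  proof (rule ccontr)
    assume "\<not> (\<not> p dvd y1 \<or> \<not> p dvd y2)"
    then have "p dvd y1^2" "p dvd y2^2" by (auto simp: power2_eq_square)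
    then have "p dvd v i * y1^2 + v j * y2^2" by (intro dvd_add dvd_mult)
    from dvd_diff[OF this pd] have "p dvd u" by simp
    with u show False by simp
  qed
  then show ?thesis
  proof
    assume y: "\<not> p dvd y1"
    show ?thesis
      by (rule gen_place[where I = "{i, j}" and ix = i and c = 1 and e = e and u = v and
          g = "\<lambda>m. s" and y = "\<lambda>m. if m = i then y1 else y2", OF p c1 _ _ gc _ _ cg])
       (use idx H y in auto)
  next
    assume y: "\<not> p dvd y2"
    show ?thesis
      by (rule gen_place[where I = "{i, j}" and ix = j and c = 1 and e = e and u = v and
          g = "\<lambda>m. s" and y = "\<lambda>m. if m = i then y1 else y2", OF p c1 _ _ gc _ _ cg])
       (use idx H y in auto)
  qed
qed

lemma codd_B:
  fixes d v :: "nat \<Rightarrow> int" and u p :: int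
  assumes p: "prime p" and po: "odd p"
    and H: "\<And>m. m < 4 \<Longrightarrow> d m = p^(e m) * v m \<and> \<not> p dvd v m \<and> e m < Suc f"
    and idx: "j < 4" "k < 4" "l < 4" "j \<noteq> k" "j \<noteq> l" "k \<noteq> l"
    and par: "odd (Suc f - e j)" "odd (Suc f - e k)" "odd (Suc f - e l)"
  shows "LRq p d (p^(Suc f) * u)"
proof -
  have "\<not> p dvd v j" "\<not> p dvd v k" using H[OF idx(1)] H[OF idx(2)] by auto
  then obtain y1 y2 where yy: "[v j * y1^2 + v k * y2^2 = - v l] (mod p)"
    using two_squares_mod[OF p po] by blast
  have pd: "p dvd v j * y1^2 + v k * y2^2 + v l - p * u"
  proof -
    have "p dvd v j * y1^2 + v k * y2^2 - (- v l)" using yy by (simp add: cong_iff_dvd_diff)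
    then show ?thesis by (simp add: dvd_diff)
  qed
  have c1: "(odd p \<and> 1 \<le> (1::nat)) \<or> 3 \<le> (1::nat)" using po by simp
  have gc: "e m \<le> f \<and> even (f - e m) \<and> d m = p^(e m) * v m"
    if m: "m \<in> {j, k, l}" for m
  proof -
    from m idx have m4: "m < 4" by auto
    from H[OF m4] have em: "e m \<le> f" "d m = p^(e m) * v m" by auto
    have "odd (Suc f - e m)" using m par by auto
    then have "even (f - e m)" using em(1) by (simp add: Suc_diff_le)
    then show ?thesis using em by auto
  qed
  have sum: "(\<Sum>m\<in>{j, k, l}. p^f * v m * (if m = j then y1 else if m = k then y2 else 1)^2) - p^(Suc f) * u
     = p^f * (v j * y1^2 + v k * y2^2 + v l - p * u)"
    using idx by (simp add: algebra_simps)
  have cg: "[(\<Sum>m\<in>{j, k, l}. p^f * v m * (if m = j then y1 else if m = k then y2 else 1)^2) = p^(Suc f) * u] (mod p^(f + 1))"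
    using cong_from_dvd[OF sum, of 1] pd by simp
  have y: "\<not> p dvd (if l = j then y1 else if l = k then y2 else 1)"
    using idx prime_gt_1_int[OF p] by simp
  show ?thesis
    by (rule gen_place[where I = "{j, k, l}" and ix = l and c = 1 and e = e and u = v and
          g = "\<lambda>m. f" and y = "\<lambda>m. if m = j then y1 else if m = k then y2 else 1", OF p c1 _ _ gc _ _ cg])
       (use idx H y in auto)
qed


lemma lt4: "(i::nat) < 4 \<longleftrightarrow> i = 0 \<or> i = 1 \<or> i = 2 \<or> i = 3"
  by arith

lemma ex4: "(\<exists>i::nat. i < 4 \<and> Q i) \<longleftrightarrow> Q 0 \<or> Q 1 \<or> Q 2 \<or> Q 3"
  unfolding lt4 by auto

lemma pat_odd:
  fixes P :: "nat \<Rightarrow> bool"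
  shows
  "(\<exists>i. i < 4 \<and> (\<exists>j. j < 4 \<and> i \<noteq> j \<and> P i \<and> P j)) \<or>
   (\<exists>j. j < 4 \<and> (\<exists>k. k < 4 \<and> (\<exists>l. l < 4 \<and> j \<noteq> k \<and> j \<noteq> l \<and> k \<noteq> l \<and> \<not> P j \<and> \<not> P k \<and> \<not> P l)))"
  by (cases "P 0"; cases "P 1"; cases "P 2"; cases "P 3"; simp only: ex4; simp)

lemma pat2:
  fixes P :: "nat \<Rightarrow> bool"
  shows
  "(\<exists>i0. i0 < 4 \<and> (\<exists>i1. i1 < 4 \<and> (\<exists>j. j < 4 \<and> i0 \<noteq> i1 \<and> i0 \<noteq> j \<and> i1 \<noteq> j \<and> P i0 \<and> P i1 \<and> \<not> P j))) \<or>
   (\<exists>i0. i0 < 4 \<and> (\<exists>j. j < 4 \<and> (\<exists>k. k < 4 \<and> (\<exists>l. l < 4 \<and> i0 \<noteq> j \<and> i0 \<noteq> k \<and> i0 \<noteq> l \<and>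
      j \<noteq> k \<and> j \<noteq> l \<and> k \<noteq> l \<and> P i0 \<and> \<not> P j \<and> \<not> P k \<and> \<not> P l)))) \<or>
   (P 0 \<and> P 1 \<and> P 2 \<and> P 3) \<or> (\<not> P 0 \<and> \<not> P 1 \<and> \<not> P 2 \<and> \<not> P 3)"
  by (cases "P 0"; cases "P 1"; cases "P 2"; cases "P 3"; simp only: ex4; simp)


lemma decomp:
  fixes p x :: int
  assumes "prime p" "x \<noteq> 0"
  shows "x = p^(multiplicity p x) * (x div p^(multiplicity p x)) \<and> \<not> p dvd (x div p^(multiplicity p x))"
proof -
  have nu: "\<not> is_unit p" using assms(1) not_prime_unit by blast
  have "p^(multiplicity p x) * (x div p^(multiplicity p x)) = x"
    by (rule dvd_mult_div_cancel[OF multiplicity_dvd])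
  then show ?thesis using multiplicity_decompose[OF assms(2) nu] by simp
qed

lemma thr_LRq:
  fixes p a :: int and d :: "nat \<Rightarrow> int"
  assumes p: "prime p" and a: "a \<noteq> 0"
    and dm: "\<And>m. m < 4 \<Longrightarrow> d m \<noteq> 0 \<and> multiplicity p (d m) < multiplicity p a"
  shows "LRq p d a"
proof -
  define s where "s = multiplicity p a"
  define u where "u = a div p^s"
  define e where "e = (\<lambda>m. multiplicity p (d m))"
  define v where "v = (\<lambda>m. d m div p^(e m))"
  have au0: "a = p^s * u \<and> \<not> p dvd u" using decomp[OF p a] unfolding s_def u_def by blast
  have au: "a = p^s * u" "\<not> p dvd u" using au0 by blast+
  have H: "d m = p^(e m) * v m \<and> \<not> p dvd v m \<and> e m < s" if m: "m < 4" for m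
  proof -
    have d0: "d m \<noteq> 0" and lt: "multiplicity p (d m) < multiplicity p a" using dm[OF m] by blast+
    have "d m = p^(e m) * v m \<and> \<not> p dvd v m" using decomp[OF p d0] unfolding e_def v_def by blast
    moreover have "e m < s" using lt unfolding e_def s_def by blast
    ultimately show ?thesis by blast
  qed
  have "e 0 < s" using H[of 0] by simp
  then have s0: "0 < s" by linarith
  then obtain f where sf: "s = Suc f" by (cases s) auto
  show ?thesis
  proof (cases "p = 2")
    case False
    then have po: "odd p" using p prime_odd_int[of p] prime_ge_2_int[of p] by fastforce
    from pat_odd[of "\<lambda>m. even (s - e m)"] show ?thesis
    proof (elim disjE exE conjE)
      fix i j assume A: "i < 4" "j < 4" "i \<noteq> j" "even (s - e i)" "even (s - e j)"
      show ?thesis unfolding au by (rule codd_A[OF p po H au(2) A])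
    next
      fix j k l assume A: "j < 4" "k < 4" "l < 4" "j \<noteq> k" "j \<noteq> l" "k \<noteq> l"
        and B: "\<not> even (s - e j)" "\<not> even (s - e k)" "\<not> even (s - e l)"
      have H': "\<And>m. m < 4 \<Longrightarrow> d m = p^(e m) * v m \<and> \<not> p dvd v m \<and> e m < Suc f"
        using H sf by simp
      have B': "odd (Suc f - e j)" "odd (Suc f - e k)" "odd (Suc f - e l)" using B sf by auto
      show ?thesis unfolding au sf by (rule codd_B[OF p po H' A B'])
    qed
  next
    case True
    have H2: "\<And>m. m < 4 \<Longrightarrow> d m = 2^(e m) * v m \<and> odd (v m) \<and> e m < s" using H True by simp
    have H2': "\<And>m. m < 4 \<Longrightarrow> d m = 2^(e m) * v m \<and> odd (v m) \<and> e m < Suc f" using H2 sf by simp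
    have uo: "odd u" using au True by simp
    from pat2[of "\<lambda>m. even (s - e m)"] show ?thesis
    proof (elim disjE exE conjE)
      fix i0 i1 j assume A: "i0 < 4" "i1 < 4" "j < 4" "i0 \<noteq> i1" "i0 \<noteq> j" "i1 \<noteq> j"
        "even (s - e i0)" "even (s - e i1)" and B: "\<not> even (s - e j)"
      have B': "odd (s - e j)" using B by simp
      show ?thesis unfolding au True by (rule c2_i[OF H2 uo A B'])
    next
      fix i0 j k l assume A: "i0 < 4" "j < 4" "k < 4" "l < 4" "i0 \<noteq> j" "i0 \<noteq> k" "i0 \<noteq> l"
        "j \<noteq> k" "j \<noteq> l" "k \<noteq> l" "even (s - e i0)" and B: "\<not> even (s - e j)" "\<not> even (s - e k)" "\<not> even (s - e l)"
      have B': "odd (s - e j)" "odd (s - e k)" "odd (s - e l)" using B by auto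
      show ?thesis unfolding au True by (rule c2_ii[OF H2 uo A B'])
    next
      assume P: "even (s - e 0)" "even (s - e 1)" "even (s - e 2)" "even (s - e 3)"
      show ?thesis
      proof (cases "\<exists>i. i < 4 \<and> 4 dvd v i - u")
        case True
        then obtain i where i: "i < 4" "4 dvd v i - u" by blast
        define i1 where "i1 = (if i = 0 then 1 else 0::nat)"
        have i1: "i1 < 4" "i \<noteq> i1" unfolding i1_def by auto
        have E: "even (s - e i)" "even (s - e i1)" using P i(1) i1(1) unfolding lt4 by auto
        show ?thesis unfolding au \<open>p = 2\<close> by (rule c2_iiia[OF H2 uo i(1) i1(1) i1(2) E i(2)])
      next
        case False
        then have N: "\<not> 4 dvd v 0 - u" "\<not> 4 dvd v 1 - u" "\<not> 4 dvd v 2 - u" by auto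
        show ?thesis unfolding au \<open>p = 2\<close>
          by (rule c2_iiib[OF H2 uo, where ia=0 and ib=1 and ic=2 and ie=3]) (use P N in simp_all)
      qed
    next
      assume P: "\<not> even (s - e 0)" "\<not> even (s - e 1)" "\<not> even (s - e 2)" "\<not> even (s - e 3)"
      have "odd (v 0)" "odd (v 1)" "odd (v 2)" using H2 by auto
      then have "4 dvd v 0 - v 1 \<or> 4 dvd v 0 - v 2 \<or> 4 dvd v 1 - v 2" by (rule three_odd_pair)
      then show ?thesis unfolding au \<open>p = 2\<close> sf
      proof (elim disjE)
        assume D: "4 dvd v 0 - v 1"
        show "LRq 2 d (2^Suc f * u)" by (rule c2_iv[OF H2' uo, where i=0 and j=1 and k=2]) (use P sf D in simp_all)
      next
        assume D: "4 dvd v 0 - v 2"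
        show "LRq 2 d (2^Suc f * u)" by (rule c2_iv[OF H2' uo, where i=0 and j=2 and k=1]) (use P sf D in simp_all)
      next
        assume D: "4 dvd v 1 - v 2"
        show "LRq 2 d (2^Suc f * u)" by (rule c2_iv[OF H2' uo, where i=1 and j=2 and k=0]) (use P sf D in simp_all)
      qed
    qed
  qed
qed


lemma bil_add_left: "bil n G (\<lambda>j. f j + g j) y = bil n G f y + bil n G g y"
  by (simp add: bil_def algebra_simps sum.distrib)
lemma bil_add_right: "bil n G y (\<lambda>j. f j + g j) = bil n G y f + bil n G y g"
  by (simp add: bil_def algebra_simps sum.distrib)
lemma bil_diff_left: "bil n G (\<lambda>j. f j - g j) y = bil n G f y - bil n G g y"
  by (simp add: bil_def algebra_simps sum_subtractf)
lemma bil_diff_right: "bil n G y (\<lambda>j. f j - g j) = bil n G y f - bil n G y g"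
  by (simp add: bil_def algebra_simps sum_subtractf)
lemma bil_smult_left: "bil n G (\<lambda>j. c * f j) y = c * bil n G f y"
  by (simp add: bil_def sum_distrib_left algebra_simps)
lemma bil_smult_right: "bil n G y (\<lambda>j. c * f j) = c * bil n G y f"
  by (simp add: bil_def sum_distrib_left algebra_simps)

lemma bil_sym:
  assumes "sym_gram n G"
  shows "bil n G x y = bil n G y x"
proof -
  have "bil n G x y = (\<Sum>i<n. \<Sum>j<n. G j i * x i * y j)"
    unfolding bil_def using assms unfolding sym_gram_def by (intro sum.cong refl) auto
  also have "\<dots> = (\<Sum>j<n. \<Sum>i<n. G j i * x i * y j)" by (rule sum.swap)
  also have "\<dots> = bil n G y x" unfolding bil_def by (intro sum.cong refl) (simp add: algebra_simps)
  finally show ?thesis .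
qed

lemma quad_smult: "quad n G (\<lambda>j. c * x j) = c^2 * quad n G x"
  unfolding quad_def by (simp add: bil_smult_left bil_smult_right power2_eq_square)

lemma bil_sum_left:
  assumes "finite I"
  shows "bil n G (\<lambda>j. \<Sum>i\<in>I. c i * f i j) y = (\<Sum>i\<in>I. c i * bil n G (f i) y)"
  using assms
proof (induction I rule: finite_induct)
  case empty
  then show ?case by (simp add: bil_def)
next
  case (insert a I)
  then show ?case by (simp add: bil_add_left bil_smult_left)
qed

lemma bil_sum_right:
  assumes "finite I"
  shows "bil n G y (\<lambda>j. \<Sum>i\<in>I. c i * f i j) = (\<Sum>i\<in>I. c i * bil n G y (f i))"
  using assms
proof (induction I rule: finite_induct)
  case empty
  then show ?case by (simp add: bil_def)
next
  case (insert a I)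
  then show ?case by (simp add: bil_add_right bil_smult_right)
qed

lemma quad_orth_sum:
  assumes orth: "\<And>i i'. i < 4 \<Longrightarrow> i' < 4 \<Longrightarrow> i \<noteq> i' \<Longrightarrow> bil n G (wv i) (wv i') = 0"
  shows "quad n G (\<lambda>j. \<Sum>i<4. x i * wv i j) = qd (\<lambda>i. quad n G (wv i)) x"
proof -
  have "quad n G (\<lambda>j. \<Sum>i<4. x i * wv i j) = (\<Sum>i<4. x i * (\<Sum>i'<4. x i' * bil n G (wv i) (wv i')))"
    unfolding quad_def by (simp add: bil_sum_left bil_sum_right)
  also have "\<dots> = (\<Sum>i<4. x i * (x i * bil n G (wv i) (wv i)))"
  proof (rule sum.cong[OF refl])
    fix i assume i: "i \<in> {..<(4::nat)}"
    have "(\<Sum>i'<4. x i' * bil n G (wv i) (wv i')) = (\<Sum>i'\<in>{i}. x i' * bil n G (wv i) (wv i'))"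
      by (rule sum.mono_neutral_right) (use i orth in auto)
    then show "x i * (\<Sum>i'<4. x i' * bil n G (wv i) (wv i')) = x i * (x i * bil n G (wv i) (wv i))" by simp
  qed
  also have "\<dots> = qd (\<lambda>i. quad n G (wv i)) x"
    unfolding qd_def quad_def by (intro sum.cong refl) (simp add: power2_eq_square algebra_simps)
  finally show ?thesis .
qed

definition ee :: "nat \<Rightarrow> nat \<Rightarrow> int" where "ee k = (\<lambda>j. if j = k then 1 else 0)"

lemma gs4:
  assumes n4: "n \<ge> 4" and sg: "sym_gram n G" and pd: "pos_def n G"
  shows "\<exists>wv::nat \<Rightarrow> nat \<Rightarrow> int. (\<forall>i<4::nat. \<forall>i'<4. i \<noteq> i' \<longrightarrow> bil n G (wv i) (wv i') = 0) \<and> (\<forall>i<4. quad n G (wv i) > 0)"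
proof -
  have pos: "bil n G x x > 0" if "k < 4" "x k \<noteq> 0" for x k
    using pd that n4 unfolding pos_def_def quad_def by (metis less_le_trans)
  define B where "B = bil n G"
  have sy: "\<And>x y. B x y = B y x" unfolding B_def using bil_sym[OF sg] by blast
  define w0 where "w0 = ee 0"
  define w1 where "w1 = (\<lambda>j. B w0 w0 * ee 1 j - B w0 (ee 1) * w0 j)"
  define w2 where "w2 = (\<lambda>j. B w0 w0 * B w1 w1 * ee 2 j - B w1 w1 * B w0 (ee 2) * w0 j - B w0 w0 * B w1 (ee 2) * w1 j)"
  define w3 where "w3 = (\<lambda>j. B w0 w0 * B w1 w1 * B w2 w2 * ee 3 j - B w1 w1 * B w2 w2 * B w0 (ee 3) * w0 j
     - B w0 w0 * B w2 w2 * B w1 (ee 3) * w1 j - B w0 w0 * B w1 w1 * B w2 (ee 3) * w2 j)"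
  note L = bil_diff_right bil_diff_left bil_smult_right bil_smult_left
  have o01: "B w0 w1 = 0" unfolding w1_def B_def by (simp only: L) (simp add: algebra_simps)
  have o02: "B w0 w2 = 0" unfolding w2_def using o01 unfolding B_def by (simp only: L) (simp add: algebra_simps)
  have o12: "B w1 w2 = 0" unfolding w2_def using o01 sy[of w1 w0] unfolding B_def by (simp only: L) (simp add: algebra_simps)
  have o03: "B w0 w3 = 0" unfolding w3_def using o01 o02 unfolding B_def by (simp only: L) (simp add: algebra_simps)
  have o13: "B w1 w3 = 0" unfolding w3_def using o01 o12 sy[of w1 w0] unfolding B_def by (simp only: L) (simp add: algebra_simps)
  have o23: "B w2 w3 = 0" unfolding w3_def using o02 o12 sy[of w2 w0] sy[of w2 w1] unfolding B_def by (simp only: L) (simp add: algebra_simps)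
  have c0: "w0 0 = 1" "\<And>j. j > 0 \<Longrightarrow> w0 j = 0" unfolding w0_def ee_def by auto
  have q0: "B w0 w0 > 0" unfolding B_def using pos[of 0 w0] c0 by simp
  have c1: "w1 1 = B w0 w0" "\<And>j. j > 1 \<Longrightarrow> w1 j = 0" unfolding w1_def using c0 by (auto simp: ee_def)
  have q1: "B w1 w1 > 0" unfolding B_def using pos[of 1 w1] c1 q0 by simp
  have c2: "w2 2 = B w0 w0 * B w1 w1" "\<And>j. j > 2 \<Longrightarrow> w2 j = 0" unfolding w2_def using c0 c1 by (auto simp: ee_def)
  have q2: "B w2 w2 > 0" unfolding B_def using pos[of 2 w2] c2 q0 q1 by simp
  have c3: "w3 3 = B w0 w0 * B w1 w1 * B w2 w2" unfolding w3_def using c0 c1 c2 by (auto simp: ee_def)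
  have q3: "B w3 w3 > 0" unfolding B_def using pos[of 3 w3] c3 q0 q1 q2 by simp
  define wv where "wv = (\<lambda>i::nat. if i = 0 then w0 else if i = 1 then w1 else if i = 2 then w2 else w3)"
  have "\<forall>i<4. \<forall>i'<4. i \<noteq> i' \<longrightarrow> B (wv i) (wv i') = 0"
    unfolding wv_def lt4 using o01 o02 o03 o12 o13 o23 sy by auto
  moreover have "\<forall>i<4. B (wv i) (wv i) > 0"
    unfolding wv_def lt4 using q0 q1 q2 q3 by auto
  ultimately show ?thesis unfolding B_def quad_def by blast
qed


lemma transfer:
  assumes orth: "\<And>i i'. i < 4 \<Longrightarrow> i' < 4 \<Longrightarrow> i \<noteq> i' \<Longrightarrow> bil n G (wv i) (wv i') = 0"
    and L: "LRq p (\<lambda>i. quad n G (wv i)) a"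
  shows "local_rep n G p a"
  unfolding local_rep_def
proof
  fix k :: nat
  from L obtain x where "[qd (\<lambda>i. quad n G (wv i)) x = a] (mod p^k)" unfolding LRq_def by blast
  then have "[quad n G (\<lambda>j. \<Sum>i<4. x i * wv i j) = a] (mod p^k)"
    using quad_orth_sum[OF orth] by simp
  then show "\<exists>x. [quad n G x = a] (mod p^k)" by blast
qed

lemma loc_const:
  fixes p a b :: int
  assumes p: "prime p" and a: "a \<noteq> 0" and ba: "[b = a] (mod p^(multiplicity p a + 3))"
    and la: "local_rep n G p a"
  shows "local_rep n G p b"
  unfolding local_rep_def
proof
  fix k :: nat
  define t where "t = multiplicity p a"
  define a' where "a' = a div p^t"
  have aa: "a = p^t * a'" "\<not> p dvd a'" using decomp[OF p a] unfolding t_def a'_def by blast+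
  from ba obtain r where r: "b - a = p^(t+3) * r" unfolding t_def by (metis cong_iff_dvd_diff dvd_def)
  define b' where "b' = a' + p^3 * r"
  have bb: "b = p^t * b'" using r aa unfolding b'_def by (simp add: algebra_simps power_add)
  have c3: "(odd p \<and> 1 \<le> (3::nat)) \<or> 3 \<le> (3::nat)" by simp
  have "[b' = a'] (mod p^3)" unfolding b'_def by (simp add: cong_iff_dvd_diff)
  then obtain w where w: "[a' * w^2 = b'] (mod p^k)" using rescale[OF p c3 aa(2)] by blast
  from la obtain x where x: "[quad n G x = a] (mod p^(t+k))" unfolding local_rep_def by blast
  have "quad n G (\<lambda>j. w * x j) - b = w^2 * (quad n G x - a) + p^t * (a' * w^2 - b')"
    using aa bb by (simp add: quad_smult algebra_simps)
  moreover have "p^(t+k) dvd w^2 * (quad n G x - a)" using x by (simp add: cong_iff_dvd_diff)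
  moreover have "p^(t+k) dvd p^t * (a' * w^2 - b')"
    using w by (simp add: cong_iff_dvd_diff power_add mult_dvd_mono)
  ultimately have "p^(t+k) dvd quad n G (\<lambda>j. w * x j) - b" by simp
  then have "p^k dvd quad n G (\<lambda>j. w * x j) - b"
    by (rule dvd_trans[rotated]) (simp add: le_imp_power_dvd)
  then show "\<exists>x. [quad n G x = b] (mod p^k)" by (auto simp: cong_iff_dvd_diff)
qed

lemma mult_cong:
  fixes p a r :: int
  assumes p: "prime p" and r: "r \<noteq> 0" and ar: "[a = r] (mod p^(multiplicity p r + 3))"
  shows "a \<noteq> 0 \<and> multiplicity p a = multiplicity p r"
proof -
  define t where "t = multiplicity p r"
  have nu: "\<not> is_unit p" using p not_prime_unit by blast
  have d1: "p^(t+3) dvd a - r" using ar unfolding t_def by (simp add: cong_iff_dvd_diff)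
  have d2a: "p^t dvd p^(t+3)" by (rule le_imp_power_dvd) simp
  have d2b: "p^Suc t dvd p^(t+3)" by (rule le_imp_power_dvd) simp
  note d2 = d2a d2b
  have rt: "p^t dvd r" unfolding t_def by (rule multiplicity_dvd)
  have rt1: "\<not> p^Suc t dvd r"
    using power_dvd_iff_le_multiplicity[OF r nu, of "Suc t"] unfolding t_def by simp
  have "p^t dvd a - r" using dvd_trans[OF d2(1) d1] .
  then have at: "p^t dvd a" using dvd_add[OF _ rt] by fastforce
  have at1: "\<not> p^Suc t dvd a"
  proof
    assume h: "p^Suc t dvd a"
    have "p^Suc t dvd a - r" using dvd_trans[OF d2(2) d1] .
    from dvd_diff[OF h this] have "p^Suc t dvd r" by simp
    with rt1 show False by simp
  qed
  have "a \<noteq> 0" using at1 by auto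
  moreover have "multiplicity p a = t" by (rule multiplicity_eqI[OF at at1])
  ultimately show ?thesis unfolding t_def by simp
qed

lemma mult_lt:
  fixes p x :: int
  assumes p: "prime p" and x: "x > 0"
  shows "int (multiplicity p x) < x"
proof -
  define k where "k = multiplicity p x"
  have "p^k dvd x" unfolding k_def by (rule multiplicity_dvd)
  then have "p^k \<le> x" using x by (rule zdvd_imp_le)
  moreover have "(2::int)^k \<le> p^k" using prime_ge_2_int[OF p] by (intro power_mono) auto
  moreover have "int k < 2^k" using less_exp[of k] by (metis of_nat_less_iff of_nat_numeral of_nat_power)
  ultimately show ?thesis unfolding k_def by linarith
qed


lemma good:
  fixes p :: int and d :: "nat \<Rightarrow> int"
  assumes p: "prime p" and nd: "\<not> p dvd 2 * d 0 * d 1 * d 2"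
  shows "LRq p d a"
proof -
  have n2: "\<not> p dvd 2" "\<not> p dvd d 0" "\<not> p dvd d 1" "\<not> p dvd d 2"
    using nd p by (auto simp: prime_dvd_mult_iff)
  have po: "odd p"
  proof
    assume "even p"
    then have "2 dvd p" by simp
    then have "p = 2" using p primes_dvd_imp_eq[of 2 p] by simp
    with n2(1) show False by simp
  qed
  obtain y1 y2 where yy: "[d 0 * y1^2 + d 1 * y2^2 = a - d 2] (mod p)"
    using two_squares_mod[OF p po n2(2) n2(3)] by blast
  have c1: "(odd p \<and> 1 \<le> (1::nat)) \<or> 3 \<le> (1::nat)" using po by simp
  have gc: "(\<lambda>m. 0::nat) m \<le> (\<lambda>m. 0::nat) m \<and> even ((\<lambda>m. 0::nat) m - (\<lambda>m. 0::nat) m) \<and> d m = p^((\<lambda>m. 0::nat) m) * d m"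
    if "m \<in> {0,1,2::nat}" for m by simp
  have "(\<Sum>m\<in>{0,1,2::nat}. p^((\<lambda>m. 0::nat) m) * d m * (if m = 0 then y1 else if m = 1 then y2 else 1)^2)
        = d 0 * y1^2 + d 1 * y2^2 + d 2" by simp
  then have cg: "[(\<Sum>m\<in>{0,1,2::nat}. p^((\<lambda>m. 0::nat) m) * d m * (if m = 0 then y1 else if m = 1 then y2 else 1)^2) = a]
      (mod p^((\<lambda>m. 0::nat) 2 + 1))"
    using yy by (simp add: cong_iff_dvd_diff algebra_simps)
  have y: "\<not> p dvd (if (2::nat) = 0 then y1 else if (2::nat) = 1 then y2 else 1)"
    using prime_gt_1_int[OF p] by simp
  show ?thesis
    by (rule gen_place[where I = "{0,1,2}" and ix = 2 and c = 1 and e = "\<lambda>m. 0" and u = d and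
          g = "\<lambda>m. 0" and y = "\<lambda>m. if m = 0 then y1 else if m = 1 then y2 else 1", OF p c1 _ _ gc _ y cg])
       (use n2 in auto)
qed

theorem proposition1:
  fixes n :: nat and G :: "nat \<Rightarrow> nat \<Rightarrow> int"
  assumes "n \<ge> 4" and "sym_gram n G" and "pos_def n G" and "scale_one n G"
  shows "\<exists>S :: (int \<times> int) set. finite S \<and> (\<forall>(a, m)\<in>S. admissible a m) \<and>
           exceptions_gen n G = (\<Union>(a, m)\<in>S. AP a m)"
proof -
  obtain wv :: "nat \<Rightarrow> nat \<Rightarrow> int" where
    orth: "\<forall>i<4. \<forall>i'<4. i \<noteq> i' \<longrightarrow> bil n G (wv i) (wv i') = 0" and qpos: "\<forall>i<4. quad n G (wv i) > 0"
    using gs4[OF assms(1-3)] by blast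
  define d where "d = (\<lambda>i. quad n G (wv i))"
  have orth': "\<And>i i'. i < 4 \<Longrightarrow> i' < 4 \<Longrightarrow> i \<noteq> i' \<Longrightarrow> bil n G (wv i) (wv i') = 0" using orth by blast
  have LR: "\<And>p a. LRq p d a \<Longrightarrow> local_rep n G p a" unfolding d_def by (rule transfer[OF orth'])
  have dpos: "\<And>i. i < 4 \<Longrightarrow> d i > 0" using qpos unfolding d_def by blast
  have dp: "d 0 > 0" "d 1 > 0" "d 2 > 0" "d 3 > 0" using dpos by auto
  define D where "D = 2 * d 0 * d 1 * d 2"
  have D0: "D > 0" unfolding D_def using dp by simp
  define T where "T = nat (d 0 + d 1 + d 2 + d 3)"
  have bad: "p \<le> D" if p: "prime p" and nl: "\<not> local_rep n G p a" for p a
  proof -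
    have "p dvd D" using good[OF p, of d a] LR nl unfolding D_def by blast
    then show ?thesis using D0 by (rule zdvd_imp_le)
  qed
  have thr: "local_rep n G p a" if p: "prime p" and a: "a \<noteq> 0" and T: "T \<le> multiplicity p a" for p a
  proof -
    have "d m \<noteq> 0 \<and> multiplicity p (d m) < multiplicity p a" if m: "m < 4" for m
    proof -
      have "int (multiplicity p (d m)) < d m" using mult_lt[OF p dpos[OF m]] .
      moreover have "d m \<le> d 0 + d 1 + d 2 + d 3" using m dp unfolding lt4 by auto
      ultimately have "multiplicity p (d m) < T" unfolding T_def by linarith
      then show ?thesis using T dpos[OF m] by simp
    qed
    then show ?thesis by (intro LR thr_LRq[OF p a]) auto
  qed
  define S where "S = {(r, p^(t+3)) | p t r. prime p \<and> p \<le> D \<and> t < T \<and> 0 < r \<and> r < p^(t+3) \<and>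
                        multiplicity p r = t \<and> \<not> local_rep n G p r}"
  have fin: "finite S"
  proof (rule finite_subset)
    show "S \<subseteq> {0..D^(T+3)} \<times> {0..D^(T+3)}"
    proof
      fix z assume "z \<in> S"
      then obtain p t r where z: "z = (r, p^(t+3))" and pr: "prime p" "p \<le> D" "t < T" "0 < r" "r < p^(t+3)"
        unfolding S_def by blast
      have p2: "p \<ge> 2" using prime_ge_2_int[OF pr(1)] .
      have "p^(t+3) \<le> D^(t+3)" using p2 pr(2) by (intro power_mono) auto
      also have "\<dots> \<le> D^(T+3)" using D0 pr(3) p2 pr(2) by (intro power_increasing) auto
      finally have "p^(t+3) \<le> D^(T+3)" .
      then show "z \<in> {0..D^(T+3)} \<times> {0..D^(T+3)}" using z pr p2 by auto
    qed
  qed simp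
  have adm: "\<forall>(a, m)\<in>S. admissible a m"
  proof (clarify)
    fix a m assume "(a, m) \<in> S"
    then obtain p t where pr: "m = p^(t+3)" "prime p" "0 < a" "a < p^(t+3)" "multiplicity p a = t"
      unfolding S_def by blast
    show "admissible a m" unfolding admissible_def
    proof (intro conjI allI impI)
      show "0 < a" "a < m" using pr by auto
      fix q :: int assume q: "prime q" "q dvd m"
      then have "q dvd p" using pr(1,2) prime_dvd_power by blast
      then have "q = p" using q(1) pr(2) primes_dvd_imp_eq by blast
      have "multiplicity p (p^(t+3)) = t+3"
        by (rule multiplicity_prime_power[OF prime_imp_prime_elem[OF pr(2)]])
      then show "multiplicity q a < multiplicity q m"
        using pr \<open>q = p\<close> by simp
    qed
  qed
  have eq: "exceptions_gen n G = (\<Union>(a, m)\<in>S. AP a m)"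
  proof
    show "exceptions_gen n G \<subseteq> (\<Union>(a, m)\<in>S. AP a m)"
    proof
      fix a assume "a \<in> exceptions_gen n G"
      then have a0: "a > 0" and ng: "\<not> gen_rep n G a" unfolding exceptions_gen_def by auto
      then obtain p where p: "prime p" and nl: "\<not> local_rep n G p a" unfolding gen_rep_def by blast
      define t where "t = multiplicity p a"
      define m where "m = p^(t+3)"
      define r where "r = a mod m"
      have m0: "m > 0" unfolding m_def using prime_gt_0_int[OF p] by simp
      have tT: "t < T"
      proof (rule ccontr)
        assume "\<not> t < T"
        then have "T \<le> multiplicity p a" unfolding t_def by simp
        with thr[OF p] a0 nl show False by simp
      qed
      have ra: "[r = a] (mod p^(multiplicity p a + 3))" unfolding r_def m_def t_def by (simp add: cong_def)
      have ar: "[a = r] (mod p^(multiplicity p a + 3))" using ra by (rule cong_sym)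
      from mult_cong[OF p _ ra] a0 have r0: "r \<noteq> 0" and mr: "multiplicity p r = t"
        unfolding t_def by auto
      have nlr: "\<not> local_rep n G p r"
      proof
        assume "local_rep n G p r"
        moreover have "[a = r] (mod p^(multiplicity p r + 3))" using ar mr unfolding t_def by simp
        ultimately have "local_rep n G p a" using loc_const[OF p r0] by blast
        with nl show False by simp
      qed
      have "0 \<le> r" using pos_mod_sign[OF m0, of a] unfolding r_def .
      then have rpos: "0 < r" using r0 by simp
      have rm: "r < m" using m0 unfolding r_def by simp
      have inS: "(r, m) \<in> S" unfolding S_def m_def
        using p bad[OF p nl] tT rpos rm mr nlr unfolding m_def by blast
      have "a = r + m * int (nat (a div m))"
        using a0 m0 unfolding r_def by (simp add: pos_imp_zdiv_nonneg_iff)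
      then have "a \<in> AP r m" unfolding AP_def by blast
      with inS show "a \<in> (\<Union>(a, m)\<in>S. AP a m)" by blast
    qed
  next
    show "(\<Union>(a, m)\<in>S. AP a m) \<subseteq> exceptions_gen n G"
    proof (clarify)
      fix a r m assume inS: "(r, m) \<in> S" and aA: "a \<in> AP r m"
      then obtain p t where pr: "m = p^(t+3)" "prime p" "0 < r" "multiplicity p r = t" "\<not> local_rep n G p r"
        unfolding S_def by blast
      from aA obtain x where ax: "a = r + m * int x" unfolding AP_def by blast
      have m0: "m > 0" using pr(1) prime_gt_0_int[OF pr(2)] by simp
      have a0: "a > 0" using ax m0 pr(3) by (simp add: add_pos_nonneg)
      have ar: "[a = r] (mod p^(multiplicity p r + 3))" using ax pr(1,4) by (simp add: cong_iff_dvd_diff)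
      have r0: "r \<noteq> 0" using pr(3) by simp
      from mult_cong[OF pr(2) r0 ar] have an: "a \<noteq> 0" and ma: "multiplicity p a = multiplicity p r" by auto
      have "\<not> local_rep n G p a"
      proof
        assume "local_rep n G p a"
        moreover have "[r = a] (mod p^(multiplicity p a + 3))" using ar ma by (simp add: cong_sym)
        ultimately have "local_rep n G p r" using loc_const[OF pr(2) an] by blast
        with pr(5) show False by simp
      qed
      then have "\<not> gen_rep n G a" unfolding gen_rep_def using pr(2) by blast
      then show "a \<in> exceptions_gen n G" unfolding exceptions_gen_def using a0 by simp
    qed
  qed
  show ?thesis using fin adm eq by blast
qed


end
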